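(* Let $\rho$ be a function quasi-norm over a $\sigma$-finite measure space $(\Omega,\Sigma,\mu)$ with the Fatou property, and let $X$ be a Banach space. If $x$ and $x_n$ ($n\in\mathbb{N}$) are measurable functions $\Omega\to X$ with $\lim_n\rho(\|x-x_n\|)=0$ and $\sup_n\|x_n\|\le g$ a.e. for some absolutely continuous $g\in L_0^+(\mu)$ with $\rho(g)<\infty$, then $\lim_n\rho(\|x_n\|)=\rho(\|x\|)$.
   Context: $L_0^+(\mu)$: measurable functions $\Omega\to[0,\infty]$ modulo a.e. equality. A function quasi-norm is $\rho\colon L_0^+(\mu)\to[0,\infty]$ with (F1) $\rho(tf)=t\rho(f)$, $t\ge0$; (F2) $f\le g$ a.e. $\Rightarrow\rho(f)\le\rho(g)$; (F3) $\rho(\chi_E)<\infty$ if $\mu(E)<\infty$; (F4) for all $E$ with $\mu(E)<\infty$ and $\varepsilon>0$ there is $\delta>0$ with $\mu(A)\le\varepsilon$ whenever $A\subseteq E$ measurable and $\rho(\chi_A)\le\delta$; (F5) $\rho(f+g)\le\kappa(\rho(f)+\rho(g))$. Fatou property: $\rho(\lim_nf_n)\le\lim_n\rho(f_n)$ for every non-decreasing $(f_n)$ in $L_0^+(\mu)$. A function $g\in L_0^+(\mu)$ with $\rho(g)<\infty$ is absolutely continuous (w.r.t. $\rho$) if $\lim_n\rho(f_n)=\rho(\lim_nf_n)$ for every non-increasing sequence $(f_n)$ in $L_0^+(\mu)$ with $f_1\le g$. *)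

theory Defs
  imports "HOL-Analysis.Analysis"
begin

text \<open>Elements of L_0^+(mu) are represented by Borel measurable functions
  'a => ennreal; a.e. equality is respected because of (F2) (stated a.e.).\<close>

definition function_quasi_norm ::
  "'a measure \<Rightarrow> (('a \<Rightarrow> ennreal) \<Rightarrow> ennreal) \<Rightarrow> bool" where
  "function_quasi_norm M \<rho> \<longleftrightarrow>
     \<comment> \<open>(F1)\<close>
     (\<forall>f t. f \<in> borel_measurable M \<longrightarrow> t \<ge> 0 \<longrightarrow>
        \<rho> (\<lambda>\<omega>. ennreal t * f \<omega>) = ennreal t * \<rho> f) \<and>
     \<comment> \<open>(F2)\<close>
     (\<forall>f g. f \<in> borel_measurable M \<longrightarrow> g \<in> borel_measurable M \<longrightarrow>
        (AE \<omega> in M. f \<omega> \<le> g \<omega>) \<longrightarrow> \<rho> f \<le> \<rho> g) \<and>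
     \<comment> \<open>(F3)\<close>
     (\<forall>E\<in>sets M. emeasure M E < \<infinity> \<longrightarrow> \<rho> (indicator E) < \<infinity>) \<and>
     \<comment> \<open>(F4)\<close>
     (\<forall>E\<in>sets M. emeasure M E < \<infinity> \<longrightarrow>
        (\<forall>\<epsilon>>0. \<exists>\<delta>>0. \<forall>A\<in>sets M. A \<subseteq> E \<longrightarrow>
           \<rho> (indicator A) \<le> ennreal \<delta> \<longrightarrow> emeasure M A \<le> ennreal \<epsilon>)) \<and>
     \<comment> \<open>(F5)\<close>
     (\<exists>\<kappa>::real. \<forall>f g. f \<in> borel_measurable M \<longrightarrow> g \<in> borel_measurable M \<longrightarrow>
        \<rho> (\<lambda>\<omega>. f \<omega> + g \<omega>) \<le> ennreal \<kappa> * (\<rho> f + \<rho> g))"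

definition fatou_property ::
  "'a measure \<Rightarrow> (('a \<Rightarrow> ennreal) \<Rightarrow> ennreal) \<Rightarrow> bool" where
  "fatou_property M \<rho> \<longleftrightarrow>
     (\<forall>f::nat \<Rightarrow> 'a \<Rightarrow> ennreal. (\<forall>n. f n \<in> borel_measurable M) \<longrightarrow> (AE \<omega> in M. mono (\<lambda>n. f n \<omega>)) \<longrightarrow>
        \<rho> (\<lambda>\<omega>. SUP n. f n \<omega>) \<le> (SUP n. \<rho> (f n)))"

definition absolutely_continuous_fqn ::
  "'a measure \<Rightarrow> (('a \<Rightarrow> ennreal) \<Rightarrow> ennreal) \<Rightarrow> ('a \<Rightarrow> ennreal) \<Rightarrow> bool" where
  "absolutely_continuous_fqn M \<rho> g \<longleftrightarrow>
     g \<in> borel_measurable M \<and> \<rho> g < \<infinity> \<and>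
     (\<forall>f::nat \<Rightarrow> 'a \<Rightarrow> ennreal. (\<forall>n. f n \<in> borel_measurable M) \<longrightarrow> (AE \<omega> in M. antimono (\<lambda>n. f n \<omega>)) \<longrightarrow>
        (AE \<omega> in M. f 0 \<omega> \<le> g \<omega>) \<longrightarrow>
        ((\<lambda>n. \<rho> (f n)) \<longlonglongrightarrow> \<rho> (\<lambda>\<omega>. INF n. f n \<omega>)))"

definition strongly_measurable :: "'a measure \<Rightarrow> ('a \<Rightarrow> 'b::banach) \<Rightarrow> bool" where
  "strongly_measurable M x \<longleftrightarrow>
     (\<exists>s. (\<forall>i. simple_function M (s i)) \<and> (\<forall>\<omega>\<in>space M. (\<lambda>i. s i \<omega>) \<longlonglongrightarrow> x \<omega>))"

end

theory Submission imports Defs begin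

lemma rho_mono:
  assumes "function_quasi_norm M \<rho>" "f \<in> borel_measurable M" "g \<in> borel_measurable M"
    "AE \<omega> in M. f \<omega> \<le> g \<omega>"
  shows "\<rho> f \<le> \<rho> g"
proof -
  have "\<forall>f g. f \<in> borel_measurable M \<longrightarrow> g \<in> borel_measurable M \<longrightarrow>
        (AE \<omega> in M. f \<omega> \<le> g \<omega>) \<longrightarrow> \<rho> f \<le> \<rho> g"
    using assms(1) unfolding function_quasi_norm_def by (elim conjE)
  then show ?thesis using assms(2-4) by blast
qed

lemma rho_cong:
  assumes "function_quasi_norm M \<rho>" "f \<in> borel_measurable M" "g \<in> borel_measurable M"
    "AE \<omega> in M. f \<omega> = g \<omega>"
  shows "\<rho> f = \<rho> g"
proof (rule antisym)
  show "\<rho> f \<le> \<rho> g" by (rule rho_mono[OF assms(1-3)]) (use assms(4) in auto)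
  show "\<rho> g \<le> \<rho> f" by (rule rho_mono[OF assms(1,3,2)]) (use assms(4) in auto)
qed

lemma conv_ae:
  fixes z :: "nat \<Rightarrow> 'a \<Rightarrow> ennreal"
  assumes qn: "function_quasi_norm M \<rho>" and fat: "fatou_property M \<rho>"
    and ac: "absolutely_continuous_fqn M \<rho> g"
    and zm: "\<And>n. z n \<in> borel_measurable M" and fm: "f \<in> borel_measurable M"
    and lim: "AE \<omega> in M. (\<lambda>n. z n \<omega>) \<longlonglongrightarrow> f \<omega>"
    and dom: "AE \<omega> in M. \<forall>n. z n \<omega> \<le> g \<omega>"
  shows "(\<lambda>n. \<rho> (z n)) \<longlonglongrightarrow> \<rho> f"
proof -
  define h where "h n = (\<lambda>\<omega>. SUP k\<in>{n..}. z k \<omega>)" for n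
  define l where "l n = (\<lambda>\<omega>. INF k\<in>{n..}. z k \<omega>)" for n
  have hm: "h n \<in> borel_measurable M" for n unfolding h_def using zm by measurable
  have lm: "l n \<in> borel_measurable M" for n unfolding l_def using zm by measurable
  have hinf: "AE \<omega> in M. (INF n. h n \<omega>) = f \<omega>"
    using lim
  proof eventually_elim
    case (elim \<omega>)
    then show ?case unfolding h_def
      using lim_imp_Limsup[OF _ elim] by (simp add: limsup_INF_SUP)
  qed
  have lsup: "AE \<omega> in M. (SUP n. l n \<omega>) = f \<omega>"
    using lim
  proof eventually_elim
    case (elim \<omega>)
    then show ?case unfolding l_def
      using lim_imp_Liminf[OF _ elim] by (simp add: liminf_SUP_INF)
  qed
  have "(\<lambda>n. \<rho> (h n)) \<longlonglongrightarrow> \<rho> (\<lambda>\<omega>. INF n. h n \<omega>)"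
    using ac unfolding absolutely_continuous_fqn_def
  proof (elim conjE, elim allE[of _ h], elim impE)
    show "\<forall>n. h n \<in> borel_measurable M" using hm by auto
    show "AE \<omega> in M. antimono (\<lambda>n. h n \<omega>)"
      by (auto simp: antimono_def h_def intro!: SUP_subset_mono)
    show "AE \<omega> in M. h 0 \<omega> \<le> g \<omega>" using dom
      by eventually_elim (auto simp: h_def intro!: SUP_least)
  qed auto
  moreover have "\<rho> (\<lambda>\<omega>. INF n. h n \<omega>) = \<rho> f"
    by (rule rho_cong[OF qn _ fm hinf]) (use hm in measurable)
  ultimately have hl: "(\<lambda>n. \<rho> (h n)) \<longlonglongrightarrow> \<rho> f" by simp
  have "limsup (\<lambda>n. \<rho> (z n)) \<le> limsup (\<lambda>n. \<rho> (h n))"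
  proof (rule Limsup_mono, rule always_eventually, rule allI)
    fix n show "\<rho> (z n) \<le> \<rho> (h n)"
      by (rule rho_mono[OF qn zm hm]) (auto simp: h_def intro!: SUP_upper)
  qed
  also have "\<dots> = \<rho> f" using lim_imp_Limsup[OF _ hl] by simp
  finally have up: "limsup (\<lambda>n. \<rho> (z n)) \<le> \<rho> f" .
  have "\<rho> f = \<rho> (\<lambda>\<omega>. SUP n. l n \<omega>)"
    by (rule rho_cong[OF qn fm _ ]) (use lm lsup in \<open>measurable, auto\<close>)
  also have "\<dots> \<le> (SUP n. \<rho> (l n))"
  proof -
    have "AE \<omega> in M. mono (\<lambda>n. l n \<omega>)"
      by (auto simp: mono_def l_def intro!: INF_superset_mono)
    then show ?thesis using fat lm unfolding fatou_property_def by blast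
  qed
  also have "\<dots> \<le> liminf (\<lambda>n. \<rho> (z n))"
    unfolding liminf_SUP_INF
  proof (rule SUP_mono)
    fix n
    have "\<rho> (l n) \<le> (INF m\<in>{n..}. \<rho> (z m))"
    proof (rule INF_greatest)
      fix m assume "m \<in> {n..}"
      then show "\<rho> (l n) \<le> \<rho> (z m)"
        by (intro rho_mono[OF qn lm zm]) (auto simp: l_def intro!: INF_lower)
    qed
    then show "\<exists>m\<in>UNIV. \<rho> (l n) \<le> (INF m\<in>{m..}. \<rho> (z m))" by blast
  qed
  finally have lo: "\<rho> f \<le> liminf (\<lambda>n. \<rho> (z n))" .
  have "liminf (\<lambda>n. \<rho> (z n)) \<le> limsup (\<lambda>n. \<rho> (z n))" by (rule Liminf_le_Limsup) simp
  with up lo have "liminf (\<lambda>n. \<rho> (z n)) = \<rho> f" "limsup (\<lambda>n. \<rho> (z n)) = \<rho> f" by auto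
  then show ?thesis by (simp add: tendsto_iff_Liminf_eq_Limsup)
qed


lemma sm_diff:
  fixes x y :: "'a \<Rightarrow> 'b::banach"
  assumes "strongly_measurable M x" "strongly_measurable M y"
  shows "(\<lambda>\<omega>. x \<omega> - y \<omega>) \<in> borel_measurable M"
proof -
  obtain s where s: "\<And>i. simple_function M (s i)" "\<And>\<omega>. \<omega>\<in>space M \<Longrightarrow> (\<lambda>i. s i \<omega>) \<longlonglongrightarrow> x \<omega>"
    using assms(1) unfolding strongly_measurable_def by metis
  obtain t where t: "\<And>i. simple_function M (t i)" "\<And>\<omega>. \<omega>\<in>space M \<Longrightarrow> (\<lambda>i. t i \<omega>) \<longlonglongrightarrow> y \<omega>"
    using assms(2) unfolding strongly_measurable_def by metis
  show ?thesis
  proof (rule borel_measurable_LIMSEQ_metric[where f="\<lambda>i \<omega>. s i \<omega> - t i \<omega>"])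
    fix i show "(\<lambda>\<omega>. s i \<omega> - t i \<omega>) \<in> borel_measurable M"
      by (rule borel_measurable_simple_function, rule simple_function_compose2[OF s(1) t(1)])
  next
    fix \<omega> assume "\<omega> \<in> space M"
    then show "(\<lambda>i. s i \<omega> - t i \<omega>) \<longlonglongrightarrow> x \<omega> - y \<omega>" using s(2) t(2) by (intro tendsto_intros)
  qed
qed

lemma sm_meas:
  fixes x :: "'a \<Rightarrow> 'b::banach"
  assumes "strongly_measurable M x"
  shows "x \<in> borel_measurable M"
proof -
  obtain s where s: "\<And>i. simple_function M (s i)" "\<And>\<omega>. \<omega>\<in>space M \<Longrightarrow> (\<lambda>i. s i \<omega>) \<longlonglongrightarrow> x \<omega>"
    using assms(1) unfolding strongly_measurable_def by metis
  show ?thesis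
    by (rule borel_measurable_LIMSEQ_metric[where f=s]) (use s borel_measurable_simple_function in auto)
qed

lemma ae_subseq:
  fixes x :: "'a \<Rightarrow> 'b::banach" and y :: "nat \<Rightarrow> 'a \<Rightarrow> 'b"
  assumes sf: "sigma_finite_measure M" and qn: "function_quasi_norm M \<rho>"
    and dm: "\<And>n. (\<lambda>\<omega>. x \<omega> - y n \<omega>) \<in> borel_measurable M"
    and lim: "(\<lambda>n. \<rho> (\<lambda>\<omega>. ennreal (norm (x \<omega> - y n \<omega>)))) \<longlonglongrightarrow> 0"
  shows "\<exists>s. AE \<omega> in M. (\<lambda>k. y (s k) \<omega>) \<longlonglongrightarrow> x \<omega>"
proof -
  obtain A :: "nat \<Rightarrow> 'a set" where A: "range A \<subseteq> sets M" "(\<Union>i. A i) = space M"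
    "\<And>i. emeasure M (A i) \<noteq> \<infinity>" "incseq A"
    using sigma_finite_measure.sigma_finite_incseq[OF sf] by metis
  have F1: "\<forall>f t. f \<in> borel_measurable M \<longrightarrow> t \<ge> 0 \<longrightarrow>
        \<rho> (\<lambda>\<omega>. ennreal t * f \<omega>) = ennreal t * \<rho> f"
    using qn unfolding function_quasi_norm_def by (elim conjE)
  have F4: "\<forall>E\<in>sets M. emeasure M E < \<infinity> \<longrightarrow>
        (\<forall>\<epsilon>>0. \<exists>\<delta>>0. \<forall>A\<in>sets M. A \<subseteq> E \<longrightarrow>
           \<rho> (indicator A) \<le> ennreal \<delta> \<longrightarrow> emeasure M A \<le> ennreal \<epsilon>)"
    using qn unfolding function_quasi_norm_def by (elim conjE)
  define D where "D k n = A k \<inter> {\<omega>\<in>space M. (1/2::real)^k < norm (x \<omega> - y n \<omega>)}" for k n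
  have Dm: "D k n \<in> sets M" for k n
  proof -
    have "{\<omega>\<in>space M. (1/2::real)^k < norm (x \<omega> - y n \<omega>)} \<in> sets M"
      using dm[of n] by measurable
    then show ?thesis using A(1) unfolding D_def by auto
  qed
  define nf where "nf n = (\<lambda>\<omega>. ennreal (norm (x \<omega> - y n \<omega>)))" for n
  have nfm: "nf n \<in> borel_measurable M" for n unfolding nf_def using dm[of n] by measurable
  have ex: "\<exists>n. emeasure M (D k n) \<le> ennreal ((1/2)^k)" for k
  proof -
    have "A k \<in> sets M" "emeasure M (A k) < \<infinity>" using A(1) A(3)[of k] by (auto simp: less_top)
    then obtain \<delta> where \<delta>: "\<delta> > 0" "\<And>B. B \<in> sets M \<Longrightarrow> B \<subseteq> A k \<Longrightarrow>
        \<rho> (indicator B) \<le> ennreal \<delta> \<Longrightarrow> emeasure M B \<le> ennreal ((1/2)^k)"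
      using F4 by (metis zero_less_divide_1_iff zero_less_numeral zero_less_power)
    have "0 < ennreal (\<delta> / 2^k)" using \<delta>(1) by simp
    from order_tendstoD(2)[OF lim this] obtain n where n: "\<rho> (nf n) < ennreal (\<delta> / 2^k)"
      unfolding nf_def by (auto simp: eventually_sequentially)
    have "\<rho> (indicator (D k n)) \<le> \<rho> (\<lambda>\<omega>. ennreal (2^k) * nf n \<omega>)"
    proof (rule rho_mono[OF qn])
      show "indicator (D k n) \<in> borel_measurable M" using Dm by simp
      show "(\<lambda>\<omega>. ennreal (2^k) * nf n \<omega>) \<in> borel_measurable M" using nfm by measurable
      show "AE \<omega> in M. indicator (D k n) \<omega> \<le> ennreal (2 ^ k) * nf n \<omega>"
      proof (rule AE_I2)
        fix \<omega> assume "\<omega> \<in> space M"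
        show "indicator (D k n) \<omega> \<le> ennreal (2 ^ k) * nf n \<omega>"
        proof (cases "\<omega> \<in> D k n")
          case True
          then have "(1/2::real)^k < norm (x \<omega> - y n \<omega>)" unfolding D_def by auto
          then have "1 \<le> (2::real)^k * norm (x \<omega> - y n \<omega>)"
            by (simp add: power_one_over field_simps)
          then have "ennreal 1 \<le> ennreal ((2::real)^k * norm (x \<omega> - y n \<omega>))"
            using ennreal_leI by blast
          then show ?thesis using True unfolding nf_def
            by (simp add: ennreal_mult'' del: ennreal_1) (metis ennreal_1)
        qed simp
      qed
    qed
    also have "\<dots> = ennreal (2^k) * \<rho> (nf n)" using F1 nfm by simp
    also have "\<dots> \<le> ennreal (2^k) * ennreal (\<delta> / 2^k)"
      using n by (intro mult_left_mono) auto
    also have "\<dots> = ennreal \<delta>" using \<delta>(1) by (subst ennreal_mult[symmetric]) auto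
    finally have "emeasure M (D k n) \<le> ennreal ((1/2)^k)"
      using \<delta>(2)[OF Dm] unfolding D_def by auto
    then show ?thesis by blast
  qed
  then obtain s where s: "\<And>k. emeasure M (D k (s k)) \<le> ennreal ((1/2)^k)" by metis
  define B where "B k = D k (s k)" for k
  have Bm: "B k \<in> sets M" for k unfolding B_def using Dm by simp
  have Bfin: "emeasure M (B k) < \<infinity>" for k
    using s[of k] unfolding B_def by (simp add: le_less_trans[OF _ ennreal_less_top])
  have Bme: "measure M (B k) \<le> (1/2)^k" for k
  proof -
    have "emeasure M (B k) \<noteq> top" using Bfin[of k] by (simp add: less_top)
    then have "emeasure M (B k) = ennreal (measure M (B k))" by (rule emeasure_eq_ennreal_measure)
    then have "ennreal (measure M (B k)) \<le> ennreal ((1/2)^k)"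
      using s[of k, folded B_def] by simp
    then show ?thesis by (subst (asm) ennreal_le_iff) auto
  qed
  have "summable (\<lambda>k. measure M (B k))"
    by (rule summable_comparison_test'[where g="\<lambda>k. (1/2::real)^k" and N=0])
       (use Bme in \<open>auto intro: summable_geometric\<close>)
  from borel_cantelli_AE1[OF Bm Bfin this]
  have ev: "AE \<omega> in M. eventually (\<lambda>k. \<omega> \<in> space M - B k) sequentially" .
  show ?thesis
  proof (intro exI[of _ s])
    show "AE \<omega> in M. (\<lambda>k. y (s k) \<omega>) \<longlonglongrightarrow> x \<omega>"
      using ev
    proof (rule AE_mp, intro AE_I2 impI)
      fix \<omega> assume om: "\<omega> \<in> space M" and e: "eventually (\<lambda>k. \<omega> \<in> space M - B k) sequentially"
      obtain m where m: "\<omega> \<in> A m" using om A(2) by auto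
      have "eventually (\<lambda>k. \<omega> \<in> A k) sequentially"
        unfolding eventually_sequentially using m A(4) by (auto simp: incseq_def)
      with e have "eventually (\<lambda>k. norm (x \<omega> - y (s k) \<omega>) \<le> (1/2)^k) sequentially"
        by eventually_elim (auto simp: B_def D_def om not_less)
      moreover have "(\<lambda>k. (1/2::real)^k) \<longlonglongrightarrow> 0" by (rule LIMSEQ_power_zero) simp
      ultimately have "(\<lambda>k. x \<omega> - y (s k) \<omega>) \<longlonglongrightarrow> 0" by (rule Lim_null_comparison)
      then have "(\<lambda>k. x \<omega> - (x \<omega> - y (s k) \<omega>)) \<longlonglongrightarrow> x \<omega> - 0"
        by (intro tendsto_intros)
      then show "(\<lambda>k. y (s k) \<omega>) \<longlonglongrightarrow> x \<omega>" by simp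
    qed
  qed
qed


theorem proposition3p33:
  fixes M :: "'a measure" and \<rho> :: "('a \<Rightarrow> ennreal) \<Rightarrow> ennreal"
    and x :: "'a \<Rightarrow> 'b::banach" and xs :: "nat \<Rightarrow> 'a \<Rightarrow> 'b"
    and g :: "'a \<Rightarrow> ennreal"
  assumes "sigma_finite_measure M"
    and "function_quasi_norm M \<rho>"
    and "fatou_property M \<rho>"
    and "strongly_measurable M x"
    and "\<And>n. strongly_measurable M (xs n)"
    and "(\<lambda>n. \<rho> (\<lambda>\<omega>. ennreal (norm (x \<omega> - xs n \<omega>)))) \<longlonglongrightarrow> 0"
    and "absolutely_continuous_fqn M \<rho> g"
    and "AE \<omega> in M. (SUP n. ennreal (norm (xs n \<omega>))) \<le> g \<omega>"
  shows "(\<lambda>n. \<rho> (\<lambda>\<omega>. ennreal (norm (xs n \<omega>)))) \<longlonglongrightarrow> \<rho> (\<lambda>\<omega>. ennreal (norm (x \<omega>)))"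
proof (rule ccontr)
  define L where "L = \<rho> (\<lambda>\<omega>. ennreal (norm (x \<omega>)))"
  define R where "R n = \<rho> (\<lambda>\<omega>. ennreal (norm (xs n \<omega>)))" for n
  assume "\<not> ?thesis"
  then have "\<not> R \<longlonglongrightarrow> L" unfolding R_def L_def by simp
  then obtain S where S: "open S" "L \<in> S" "\<not> eventually (\<lambda>n. R n \<in> S) sequentially"
    unfolding tendsto_def by blast
  then have "\<forall>N. \<exists>n\<ge>N. R n \<notin> S" unfolding eventually_sequentially by (meson not_le)
  then obtain r where r: "\<And>N. r N \<ge> N" "\<And>N. R (r N) \<notin> S" by metis
  have fr: "filterlim r sequentially sequentially"
    unfolding filterlim_at_top eventually_sequentially using r(1) by (meson order_trans)
  have lim2: "(\<lambda>n. \<rho> (\<lambda>\<omega>. ennreal (norm (x \<omega> - xs (r n) \<omega>)))) \<longlonglongrightarrow> 0"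
    using filterlim_compose[OF assms(6) fr] by (simp add: comp_def)
  have xm: "x \<in> borel_measurable M" using sm_meas[OF assms(4)] .
  have xsm: "xs n \<in> borel_measurable M" for n using sm_meas[OF assms(5)] .
  obtain s where s: "AE \<omega> in M. (\<lambda>k. xs (r (s k)) \<omega>) \<longlonglongrightarrow> x \<omega>"
    using ae_subseq[OF assms(1,2) sm_diff[OF assms(4) assms(5)] lim2] by blast
  have "(\<lambda>k. \<rho> (\<lambda>\<omega>. ennreal (norm (xs (r (s k)) \<omega>)))) \<longlonglongrightarrow> \<rho> (\<lambda>\<omega>. ennreal (norm (x \<omega>)))"
  proof (rule conv_ae[OF assms(2,3,7)])
    show "(\<lambda>\<omega>. ennreal (norm (xs (r (s k)) \<omega>))) \<in> borel_measurable M" for k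
      using xsm[of "r (s k)"] by measurable
    show "(\<lambda>\<omega>. ennreal (norm (x \<omega>))) \<in> borel_measurable M" using xm by measurable
    show "AE \<omega> in M. (\<lambda>k. ennreal (norm (xs (r (s k)) \<omega>))) \<longlonglongrightarrow> ennreal (norm (x \<omega>))"
      using s by eventually_elim (intro tendsto_ennrealI tendsto_norm)
    show "AE \<omega> in M. \<forall>k. ennreal (norm (xs (r (s k)) \<omega>)) \<le> g \<omega>"
      using assms(8)
    proof eventually_elim
      case (elim \<omega>)
      show ?case
      proof
        fix k
        have "ennreal (norm (xs (r (s k)) \<omega>)) \<le> (SUP n. ennreal (norm (xs n \<omega>)))"
          by (rule SUP_upper) simp
        then show "ennreal (norm (xs (r (s k)) \<omega>)) \<le> g \<omega>" using elim by (rule order_trans)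
      qed
    qed
  qed
  then have "(\<lambda>k. R (r (s k))) \<longlonglongrightarrow> L" unfolding R_def L_def .
  from topological_tendstoD[OF this S(1,2)] obtain k where "R (r (s k)) \<in> S"
    unfolding eventually_sequentially by auto
  with r(2) show False by blast
qed

end
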